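(* Let $G$ be a graph with $n$ vertices and a Hamilton cycle $C$, let $k \ge 1$ be a divisor of $n$, and let $s \ge n/k$. Then the subgraph of $\mathcal{R}_s(G,k)$ induced by the canonical $k$-partitions is connected and has diameter at most $k^2+1$.
   Context: A connected $k$-partition of a graph $G$ on $n$ vertices is a partition of $V(G)$ into $k$ nonempty sets (districts) each inducing a connected subgraph. It is a $(k,s)$-BCP (balanced with slack $s \ge 0$) if every district $U$ satisfies $\big||U| - n/k\big| \le s$; $\mathsf{Bal}_s(G,k)$ is the set of $(k,s)$-BCPs. Two distinct $(k,s)$-BCPs $\{V_1,\dots,V_k\}$, $\{W_1,\dots,W_k\}$ are related by a recombination move if there exist $i,j$ and a permutation $\pi$ of $\{1,\dots,k\}$ with $V_i\cup V_j = W_{\pi(i)}\cup W_{\pi(j)}$ and $V_\ell = W_{\pi(\ell)}$ for $\ell\notin\{i,j\}$. $\mathcal{R}_s(G,k)$ is the graph on $\mathsf{Bal}_s(G,k)$ whose edges are recombination moves. Given a Hamilton cycle $C$ of $G$, a partition in $\mathsf{Bal}_s(G,k)$ is canonical if each district consists of consecutive vertices along $C$. *)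

theory Defs
  imports Complex_Main
begin

definition simple_graph :: "'a set \<Rightarrow> ('a \<Rightarrow> 'a \<Rightarrow> bool) \<Rightarrow> bool" where
  "simple_graph V E \<longleftrightarrow> finite V \<and> (\<forall>u v. E u v \<longrightarrow> u \<in> V \<and> v \<in> V)
     \<and> (\<forall>u v. E u v \<longrightarrow> E v u) \<and> (\<forall>v. \<not> E v v)"

definition hamilton_cycle :: "'a set \<Rightarrow> ('a \<Rightarrow> 'a \<Rightarrow> bool) \<Rightarrow> 'a list \<Rightarrow> bool" where
  "hamilton_cycle V E C \<longleftrightarrow> distinct C \<and> set C = V \<and> length C \<ge> 3
     \<and> (\<forall>i < length C. E (C ! i) (C ! ((i + 1) mod length C)))"

definition induces_connected :: "('a \<Rightarrow> 'a \<Rightarrow> bool) \<Rightarrow> 'a set \<Rightarrow> bool" where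
  "induces_connected E U \<longleftrightarrow>
     (\<forall>u\<in>U. \<forall>v\<in>U. (\<lambda>x y. x \<in> U \<and> y \<in> U \<and> E x y)\<^sup>*\<^sup>* u v)"

definition connected_partition :: "'a set \<Rightarrow> ('a \<Rightarrow> 'a \<Rightarrow> bool) \<Rightarrow> nat \<Rightarrow> 'a set set \<Rightarrow> bool" where
  "connected_partition V E k P \<longleftrightarrow> finite P \<and> card P = k \<and> \<Union>P = V
     \<and> (\<forall>U\<in>P. U \<noteq> {}) \<and> (\<forall>U\<in>P. \<forall>W\<in>P. U \<noteq> W \<longrightarrow> U \<inter> W = {})
     \<and> (\<forall>U\<in>P. induces_connected E U)"

definition Bal :: "'a set \<Rightarrow> ('a \<Rightarrow> 'a \<Rightarrow> bool) \<Rightarrow> real \<Rightarrow> nat \<Rightarrow> 'a set set set" where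
  "Bal V E s k = {P. connected_partition V E k P
      \<and> (\<forall>U\<in>P. \<bar>real (card U) - real (card V) / real k\<bar> \<le> s)}"

definition recomb :: "'a set set \<Rightarrow> 'a set set \<Rightarrow> bool" where
  "recomb P Q \<longleftrightarrow> P \<noteq> Q \<and> (\<exists>A\<in>P. \<exists>B\<in>P. \<exists>C\<in>Q. \<exists>D\<in>Q. A \<noteq> B \<and> C \<noteq> D
      \<and> A \<union> B = C \<union> D \<and> P - {A, B} = Q - {C, D})"

definition R_edge :: "'a set \<Rightarrow> ('a \<Rightarrow> 'a \<Rightarrow> bool) \<Rightarrow> real \<Rightarrow> nat \<Rightarrow> 'a set set \<Rightarrow> 'a set set \<Rightarrow> bool" where
  "R_edge V E s k P Q \<longleftrightarrow> P \<in> Bal V E s k \<and> Q \<in> Bal V E s k \<and> recomb P Q"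

definition consecutive_on :: "'a list \<Rightarrow> 'a set \<Rightarrow> bool" where
  "consecutive_on C U \<longleftrightarrow> (\<exists>i < length C. \<exists>l. l \<le> length C \<and>
      U = {C ! ((i + t) mod length C) | t. t < l})"

definition canonical :: "'a list \<Rightarrow> 'a set set \<Rightarrow> bool" where
  "canonical C P \<longleftrightarrow> (\<forall>U\<in>P. consecutive_on C U)"

definition Canon :: "'a set \<Rightarrow> ('a \<Rightarrow> 'a \<Rightarrow> bool) \<Rightarrow> 'a list \<Rightarrow> real \<Rightarrow> nat \<Rightarrow> 'a set set set" where
  "Canon V E C s k = {P \<in> Bal V E s k. canonical C P}"

end

theory Submission imports Defs begin

primrec tri :: "nat \<Rightarrow> nat" where
  "tri 0 = 0" | "tri (Suc u) = tri u + Suc u"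

lemma tri_eq: "2 * tri u = u * (u + 1)"
  by (induction u) (auto simp: algebra_simps)

lemma minlem:
  fixes A B al be dd :: int
  assumes "1 \<le> dd + A - B" "\<bar>al - be\<bar> \<le> dd - 1"
  shows "1 \<le> dd + min A al - min B be"
    and "min A al - min B be \<le> A - B \<or> min A al - min B be \<le> dd - 1"
  using assms by (auto simp: min_def abs_le_iff)

lemma find_interval:
  fixes g :: "nat \<Rightarrow> int"
  assumes "\<And>j. g j \<le> g (Suc j)"
  shows "g 0 \<le> x \<Longrightarrow> x < g m \<Longrightarrow> \<exists>j<m. g j \<le> x \<and> x < g (Suc j)"
proof (induction m)
  case 0 then show ?case by simp
next
  case (Suc m)
  show ?case
  proof (cases "x < g m")
    case True then show ?thesis using Suc by (meson less_SucI)
  next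
    case False then show ?thesis using Suc.prems by auto
  qed
qed

locale setting =
  fixes V :: "'a set" and E :: "'a \<Rightarrow> 'a \<Rightarrow> bool" and C :: "'a list" and k :: nat and s :: real
  assumes sg: "simple_graph V E" and hc: "hamilton_cycle V E C" and k1: "k \<ge> 1"
    and kdvd: "k dvd card V" and sge: "s \<ge> real (card V) / real k"
begin

definition n :: nat where "n = length C"
definition d :: nat where "d = card V div k"
definition c :: "int \<Rightarrow> 'a" where "c x = C ! nat (x mod int n)"

lemma n_eq: "n = card V"
  using hc unfolding hamilton_cycle_def n_def by (metis distinct_card)

lemma n_ge3: "n \<ge> 3" using hc unfolding hamilton_cycle_def n_def by auto

lemma nkd: "n = k * d"
  using kdvd unfolding n_eq d_def by simp

lemma d_pos: "d \<ge> 1" using nkd n_ge3 by (cases d) auto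

lemma real_nk: "real (card V) / real k = real d"
  using nkd k1 n_eq by (simp add: field_simps)

lemma s_ge_d: "real d \<le> s" using sge real_nk by simp

lemma finV: "finite V" using sg unfolding simple_graph_def by auto

lemma Esym: "E u v \<Longrightarrow> E v u" using sg unfolding simple_graph_def by auto

lemma c_per: "c (x + int n) = c x" unfolding c_def by simp

lemma c_per_mult: "c (x + int q * int n) = c x" unfolding c_def by simp

lemma c_in_V: "c x \<in> V"
proof -
  have "0 \<le> x mod int n" "x mod int n < int n" using n_ge3 by simp_all
  then have "nat (x mod int n) < length C" unfolding n_def
    by (simp add: nat_less_iff)
  then show ?thesis using hc unfolding c_def hamilton_cycle_def by auto
qed

lemma c_eq_iff: "c x = c y \<longleftrightarrow> x mod int n = y mod int n"
proof
  assume h: "c x = c y"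
  have b: "0 \<le> x mod int n" "x mod int n < int n" "0 \<le> y mod int n" "y mod int n < int n"
    using n_ge3 by simp_all
  then have "nat (x mod int n) < length C" "nat (y mod int n) < length C" unfolding n_def
    by (simp_all add: nat_less_iff)
  then have "nat (x mod int n) = nat (y mod int n)"
    using hc h unfolding c_def hamilton_cycle_def 
    by (simp add: nth_eq_iff_index_eq)
  then show "x mod int n = y mod int n" using b(1,3) by simp
qed (simp add: c_def)

lemma mod_eq_window:
  fixes x y a :: int
  assumes "x mod int n = y mod int n" "a \<le> x" "x < a + int n" "a \<le> y" "y < a + int n"
  shows "x = y"
proof -
  have "int n dvd x - y" using assms(1) by (simp add: mod_eq_dvd_iff)
  then obtain q where q: "x - y = int n * q" by (auto elim: dvdE)
  have "q = 0"
  proof (rule ccontr)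
    assume "q \<noteq> 0"
    then have "\<bar>int n * q\<bar> \<ge> int n" using n_ge3 by (simp add: abs_mult)
    then show False using q assms by linarith
  qed
  then show ?thesis using q by simp
qed

lemma c_inj: "inj_on c {a..<a + int n}"
  unfolding inj_on_def using mod_eq_window c_eq_iff by auto

lemma c_image: "c ` {a..<a + int n} = V"
proof -
  have sub: "c ` {a..<a + int n} \<subseteq> V" using c_in_V by auto
  have "card (c ` {a..<a + int n}) = n" using c_inj by (simp add: card_image)
  then show ?thesis using sub finV n_eq by (metis card_subset_eq)
qed

lemma c_shift: "c (a + int t) = C ! ((nat (a mod int n) + t) mod n)"
proof -
  have "int ((nat (a mod int n) + t) mod n) = (a mod int n + int t) mod int n"
    using n_ge3 by (simp add: of_nat_mod)
  also have "\<dots> = (a + int t) mod int n" by (simp add: mod_add_left_eq)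
  finally have "nat ((a + int t) mod int n) = (nat (a mod int n) + t) mod n" by simp
  then show ?thesis unfolding c_def by simp
qed

lemma c_edge: "E (c x) (c (x + 1))"
proof -
  have i: "nat (x mod int n) < n" using n_ge3 by (simp add: nat_less_iff)
  have "E (C ! nat (x mod int n)) (C ! ((nat (x mod int n) + 1) mod n))"
    using hc i unfolding hamilton_cycle_def n_def by auto
  moreover have "c (x + 1) = C ! ((nat (x mod int n) + 1) mod n)"
    using c_shift[of x 1] by simp
  ultimately show ?thesis unfolding c_def by simp
qed

lemma c_img_shift: "x mod int n = y mod int n \<Longrightarrow> c ` {x..<x + l} = c ` {y..<y + l}"
proof -
  assume h: "x mod int n = y mod int n"
  have e: "c (x + u) = c (y + u)" for u
    unfolding c_eq_iff using h by (metis mod_add_left_eq)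
  have "c ` {x..<x + l} = (\<lambda>u. c (x + u)) ` {0..<l}"
    by (auto simp: image_iff intro!: bexI[where x="_ - x"])
  moreover have "c ` {y..<y + l} = (\<lambda>u. c (y + u)) ` {0..<l}"
    by (auto simp: image_iff intro!: bexI[where x="_ - y"])
  ultimately show ?thesis using e by simp
qed

lemma c_card: "0 \<le> l \<Longrightarrow> l \<le> int n \<Longrightarrow> card (c ` {a..<a + l}) = nat l"
proof -
  assume "0 \<le> l" "l \<le> int n"
  then have "{a..<a+l} \<subseteq> {a..<a + int n}" by auto
  then have "inj_on c {a..<a + l}" using inj_on_subset c_inj by blast
  then show ?thesis by (simp add: card_image)
qed

lemma connected_arc: "induces_connected E (c ` {a..<b})"
proof -
  let ?U = "c ` {a..<b}"
  let ?R = "\<lambda>x y. x \<in> ?U \<and> y \<in> ?U \<and> E x y"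
  have fwd: "?R\<^sup>*\<^sup>* (c x) (c (x + int m))" if "a \<le> x" "x + int m < b" for x m
    using that
  proof (induction m)
    case 0 then show ?case by simp
  next
    case (Suc m)
    then have "?R\<^sup>*\<^sup>* (c x) (c (x + int m))" by simp
    moreover have "?R (c (x + int m)) (c (x + int m + 1))"
      using Suc.prems c_edge[of "x + int m"] by auto
    ultimately have r: "?R\<^sup>*\<^sup>* (c x) (c (x + int m + 1))"
      by (rule rtranclp.rtrancl_into_rtrancl)
    have e: "x + int (Suc m) = x + int m + 1" by simp
    show ?case unfolding e by (rule r)
  qed
  have symR: "?R\<^sup>*\<^sup>* v u" if "?R\<^sup>*\<^sup>* u v" for u v
    using that
  proof (induction rule: rtranclp_induct)
    case base then show ?case by simp
  next
    case (step y z)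
    then have "?R z y" using Esym by auto
    then show ?case using step.IH by (rule converse_rtranclp_into_rtranclp)
  qed
  have "?R\<^sup>*\<^sup>* (c x) (c y)" if "x \<in> {a..<b}" "y \<in> {a..<b}" for x y
  proof (cases "x \<le> y")
    case True
    then show ?thesis using fwd[of x "nat (y - x)"] that by auto
  next
    case False
    then show ?thesis using fwd[of y "nat (x - y)"] that symR by auto
  qed
  then show ?thesis unfolding induces_connected_def by auto
qed


definition valid :: "(nat \<Rightarrow> int) \<Rightarrow> bool" where
  "valid f \<longleftrightarrow> (\<forall>j. f (j + k) = f j + int n) \<and> (\<forall>j. f j < f (Suc j))
     \<and> (\<forall>j. real_of_int (f (Suc j) - f j) \<le> real d + s)"

definition blk :: "(nat \<Rightarrow> int) \<Rightarrow> nat \<Rightarrow> 'a set" where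
  "blk f j = c ` {f j..<f (Suc j)}"

definition part :: "(nat \<Rightarrow> int) \<Rightarrow> 'a set set" where
  "part f = blk f ` {0..<k}"

lemma valid_per: "valid f \<Longrightarrow> f (j + k) = f j + int n"
  unfolding valid_def by auto

lemma valid_inc: "valid f \<Longrightarrow> f j < f (Suc j)"
  unfolding valid_def by auto

lemma valid_gap: "valid f \<Longrightarrow> real_of_int (f (Suc j) - f j) \<le> real d + s"
  unfolding valid_def by auto

lemma valid_less: "valid f \<Longrightarrow> i < j \<Longrightarrow> f i < f j"
  using lift_Suc_mono_less[of f] valid_inc by blast

lemma valid_le: "valid f \<Longrightarrow> i \<le> j \<Longrightarrow> f i \<le> f j"
  using valid_less[of f i j] by (cases "i = j") auto

lemma valid_per_mult: "valid f \<Longrightarrow> f (j + q * k) = f j + int q * int n"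
proof (induction q)
  case 0 then show ?case by simp
next
  case (Suc q)
  have "f (j + Suc q * k) = f ((j + q * k) + k)" by (simp add: algebra_simps)
  also have "\<dots> = f (j + q * k) + int n" using Suc.prems valid_per by blast
  finally show ?case using Suc by (simp add: algebra_simps)
qed

lemma valid_mod: "valid f \<Longrightarrow> f j = f (j mod k) + int (j div k) * int n"
  using valid_per_mult[of f "j mod k" "j div k"] by simp

lemma valid_gap_n: "valid f \<Longrightarrow> f (Suc j) \<le> f j + int n"
proof -
  assume v: "valid f"
  have "f (Suc j) \<le> f (j + k)" using k1 valid_le[OF v] by simp
  then show ?thesis using valid_per[OF v] by simp
qed

lemma blk_per: "valid f \<Longrightarrow> blk f (j + k) = blk f j"
proof -
  assume v: "valid f"
  have a: "f (j + k) = f j + int n" and b: "f (Suc j + k) = f (Suc j) + int n"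
    using valid_per[OF v] by blast+
  have "c ` {f j + int n..<f j + int n + (f (Suc j) - f j)} = c ` {f j..<f j + (f (Suc j) - f j)}"
    by (rule c_img_shift) simp
  then show ?thesis unfolding blk_def using a b by (simp add: add.commute)
qed

lemma blk_ne: "valid f \<Longrightarrow> c (f j) \<in> blk f j"
  unfolding blk_def using valid_inc by auto

lemma blk_card: "valid f \<Longrightarrow> card (blk f j) = nat (f (Suc j) - f j)"
proof -
  assume v: "valid f"
  have "card (c ` {f j..<f j + (f (Suc j) - f j)}) = nat (f (Suc j) - f j)"
    using valid_inc[OF v, of j] valid_gap_n[OF v, of j] by (intro c_card) auto
  then show ?thesis unfolding blk_def by simp
qed

lemma blk_disj_aux:
  assumes v: "valid f" and ij: "m \<le> i" "i < j" "j < m + k"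
  shows "blk f i \<inter> blk f j = {}"
proof (rule ccontr)
  assume "blk f i \<inter> blk f j \<noteq> {}"
  then obtain x y where x: "f i \<le> x" "x < f (Suc i)" and y: "f j \<le> y" "y < f (Suc j)"
    and e: "c x = c y" unfolding blk_def by auto
  have "f m \<le> f i" using valid_le[OF v] ij by simp
  moreover have "f (Suc j) \<le> f (m + k)" using valid_le[OF v] ij by simp
  moreover have "f (Suc i) \<le> f j" using valid_le[OF v] ij by simp
  moreover have "f (m + k) = f m + int n" using valid_per[OF v] by blast
  ultimately have "x = y" using mod_eq_window[of x y "f m"] e c_eq_iff x y by force
  then show False using x y \<open>f (Suc i) \<le> f j\<close> by simp
qed

lemma blk_disj:
  assumes v: "valid f" and "i \<in> {m..<m+k}" "j \<in> {m..<m+k}" "i \<noteq> j"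
  shows "blk f i \<inter> blk f j = {}"
  using assms blk_disj_aux[OF v, of m i j] blk_disj_aux[OF v, of m j i]
  by (cases "i < j") (auto simp: Int_commute)

lemma blk_inj: "valid f \<Longrightarrow> inj_on (blk f) {m..<m+k}"
  unfolding inj_on_def using blk_disj blk_ne by fastforce

lemma blk_window: "valid f \<Longrightarrow> blk f ` {m..<m+k} = part f"
proof (induction m)
  case 0 then show ?case unfolding part_def by simp
next
  case (Suc m)
  have "{m..<m+k} = insert m {Suc m..<m+k}" using k1 by auto
  moreover have "{Suc m..<Suc m+k} = insert (m + k) {Suc m..<m+k}" using k1 by auto
  moreover have "blk f (m + k) = blk f m" using blk_per[OF Suc.prems] by simp
  ultimately have "blk f ` {Suc m..<Suc m+k} = blk f ` {m..<m+k}" by simp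
  then show ?case using Suc by simp
qed

lemma valid_shift: "valid f \<Longrightarrow> valid (\<lambda>j. f (j + m))"
proof -
  assume v: "valid f"
  have "f (j + k + m) = f (j + m) + int n" for j using valid_per[OF v, of "j + m"]
    by (simp add: ac_simps)
  moreover have "f (j + m) < f (Suc j + m)" for j using valid_inc[OF v, of "j + m"] by simp
  moreover have "real_of_int (f (Suc j + m) - f (j + m)) \<le> real d + s" for j
    using valid_gap[OF v, of "j + m"] by simp
  ultimately show ?thesis unfolding valid_def by simp
qed

lemma part_shift: "valid f \<Longrightarrow> part (\<lambda>j. f (j + m)) = part f"
proof -
  assume v: "valid f"
  have "blk (\<lambda>j. f (j + m)) j = blk f (j + m)" for j unfolding blk_def by simp
  then have "part (\<lambda>j. f (j + m)) = (\<lambda>j. blk f (j + m)) ` {0..<k}"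
    unfolding part_def by simp
  also have "\<dots> = blk f ` ((\<lambda>j. j + m) ` {0..<k})" by (simp only: image_image)
  also have "(\<lambda>j. j + m) ` {0..<k} = {m..<m+k}"
  proof
    show "{m..<m + k} \<subseteq> (\<lambda>j. j + m) ` {0..<k}"
    proof
      fix x assume "x \<in> {m..<m+k}"
      then have "x = (x - m) + m" "x - m \<in> {0..<k}" by auto
      then show "x \<in> (\<lambda>j. j + m) ` {0..<k}" by blast
    qed
  qed auto
  finally show ?thesis using blk_window[OF v] by simp
qed

lemma union_ivl:
  fixes f :: "nat \<Rightarrow> int"
  assumes "\<And>j. f j \<le> f (Suc j)"
  shows "(\<Union>j<q. {f j..<f (Suc j)}) = {f 0..<f q}"
proof (induction q)
  case 0 then show ?case by auto
next
  case (Suc q)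
  have "f 0 \<le> f q" using assms by (induction q) (auto intro: order_trans)
  then show ?case using Suc assms[of q] by (auto simp: lessThan_Suc)
qed

lemma union_part: "valid f \<Longrightarrow> \<Union> (part f) = V"
proof -
  assume v: "valid f"
  have "\<Union> (part f) = c ` (\<Union>j<k. {f j..<f (Suc j)})"
    unfolding part_def blk_def by (auto simp: atLeast0LessThan)
  also have "(\<Union>j<k. {f j..<f (Suc j)}) = {f 0..<f k}"
    using valid_inc[OF v] by (intro union_ivl) (simp add: less_imp_le)
  also have "f k = f 0 + int n" using valid_per[OF v, of 0] by simp
  finally show ?thesis using c_image by simp
qed

lemma consec_blk: "valid f \<Longrightarrow> consecutive_on C (blk f j)"
proof -
  assume v: "valid f"
  let ?i = "nat (f j mod int n)"
  let ?l = "nat (f (Suc j) - f j)"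
  have "0 \<le> f j mod int n" "f j mod int n < int n" using n_ge3 by simp_all
  then have i: "?i < length C" unfolding n_def
    by (simp add: nat_less_iff)
  have l: "?l \<le> length C" using valid_gap_n[OF v, of j] unfolding n_def by simp
  have "blk f j = {C ! ((?i + t) mod length C) | t. t < ?l}"
  proof -
    have "blk f j = (\<lambda>t. c (f j + int t)) ` {..<?l}"
      unfolding blk_def
    proof
      show "c ` {f j..<f (Suc j)} \<subseteq> (\<lambda>t. c (f j + int t)) ` {..<?l}"
      proof
        fix y assume "y \<in> c ` {f j..<f (Suc j)}"
        then obtain x where x: "f j \<le> x" "x < f (Suc j)" "y = c x" by auto
        then show "y \<in> (\<lambda>t. c (f j + int t)) ` {..<?l}"
          by (intro image_eqI[where x="nat (x - f j)"]) auto
      qed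
    qed auto
    then show ?thesis using c_shift unfolding n_def by auto
  qed
  then show ?thesis unfolding consecutive_on_def using i l by blast
qed

lemma Canon_part: "valid f \<Longrightarrow> part f \<in> Canon V E C s k"
proof -
  assume v: "valid f"
  have cardp: "card (part f) = k" unfolding part_def
    using card_image[OF blk_inj[OF v, of 0]] by simp
  have disj: "\<forall>U\<in>part f. \<forall>W\<in>part f. U \<noteq> W \<longrightarrow> U \<inter> W = {}"
  proof (intro ballI impI)
    fix U W assume "U \<in> part f" "W \<in> part f" "U \<noteq> W"
    then obtain i j where "i \<in> {0..<k}" "j \<in> {0..<k}" "U = blk f i" "W = blk f j"
      unfolding part_def by blast
    moreover then have "i \<noteq> j" using \<open>U \<noteq> W\<close> by auto
    ultimately show "U \<inter> W = {}" using blk_disj[OF v, of i 0 j] by simp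
  qed
  have ne: "\<forall>U\<in>part f. U \<noteq> {}" unfolding part_def using blk_ne[OF v] by auto
  have conn: "\<forall>U\<in>part f. induces_connected E U"
    unfolding part_def blk_def using connected_arc by auto
  have bal: "\<forall>U\<in>part f. \<bar>real (card U) - real (card V) / real k\<bar> \<le> s"
  proof
    fix U assume "U \<in> part f"
    then obtain j where U: "U = blk f j" unfolding part_def by auto
    have cu: "real (card U) = real_of_int (f (Suc j) - f j)"
      using blk_card[OF v, of j] valid_inc[OF v, of j] U by simp
    have "1 \<le> f (Suc j) - f j" using valid_inc[OF v, of j] by simp
    then show "\<bar>real (card U) - real (card V) / real k\<bar> \<le> s"
      using cu valid_gap[OF v, of j] real_nk s_ge_d by (simp add: abs_le_iff)
  qed
  have "connected_partition V E k (part f)"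
    unfolding connected_partition_def using cardp disj ne conn union_part[OF v]
    by (simp add: part_def)
  then show ?thesis unfolding Canon_def Bal_def canonical_def
    using bal consec_blk[OF v] part_def by auto
qed


definition Rc :: "'a set set \<Rightarrow> 'a set set \<Rightarrow> bool" where
  "Rc X Y \<longleftrightarrow> X \<in> Canon V E C s k \<and> Y \<in> Canon V E C s k \<and> R_edge V E s k X Y"

definition reach :: "nat \<Rightarrow> 'a set set \<Rightarrow> 'a set set \<Rightarrow> bool" where
  "reach N X Y \<longleftrightarrow> (\<exists>m \<le> N. (Rc ^^ m) X Y)"

lemma reach_refl: "reach N X X"
  unfolding reach_def by (intro exI[where x=0]) simp

lemma reach_step: "Rc X Y \<Longrightarrow> reach 1 X Y"
  unfolding reach_def using relpowp_1[of Rc] by (metis order_refl)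

lemma reach_trans: "reach a X Y \<Longrightarrow> reach b Y Z \<Longrightarrow> reach (a + b) X Z"
proof -
  assume "reach a X Y" "reach b Y Z"
  then obtain m1 m2 where "m1 \<le> a" "(Rc ^^ m1) X Y" "m2 \<le> b" "(Rc ^^ m2) Y Z"
    unfolding reach_def by blast
  then show ?thesis unfolding reach_def
    by (intro exI[where x="m1 + m2"]) (simp add: relpowp_trans)
qed

lemma reach_mono: "reach a X Y \<Longrightarrow> a \<le> b \<Longrightarrow> reach b X Y"
  unfolding reach_def using order_trans by blast

lemma Rc_sym: "Rc X Y \<Longrightarrow> Rc Y X"
  unfolding Rc_def R_edge_def recomb_def
proof (elim conjE bexE, intro conjI)
  fix A B C' D
  assume h: "X \<noteq> Y" "A \<noteq> B" "C' \<noteq> D" "A \<union> B = C' \<union> D" "X - {A, B} = Y - {C', D}"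
    "A \<in> X" "B \<in> X" "C' \<in> Y" "D \<in> Y"
  show "Y \<noteq> X" using h by simp
  show "\<exists>A\<in>Y. \<exists>B\<in>Y. \<exists>C\<in>X. \<exists>D\<in>X. A \<noteq> B \<and> C \<noteq> D \<and> A \<union> B = C \<union> D \<and> Y - {A, B} = X - {C, D}"
    using h by metis
qed auto

lemma relpow_sym: "(Rc ^^ m) X Y \<Longrightarrow> (Rc ^^ m) Y X"
proof (induction m arbitrary: X Y)
  case 0 then show ?case by simp
next
  case (Suc m)
  then obtain Z where "(Rc ^^ m) X Z" "Rc Z Y" by (auto elim: relpowp_Suc_E)
  then show ?case using Suc.IH Rc_sym by (meson relpowp_Suc_I2)
qed

lemma reach_sym: "reach N X Y \<Longrightarrow> reach N Y X"
  unfolding reach_def using relpow_sym by blast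

lemma modne: "a < b \<Longrightarrow> b < a + k \<Longrightarrow> b mod k \<noteq> a mod k"
proof
  assume ab: "a < b" "b < a + k" and e: "b mod k = a mod k"
  then have "k dvd b - a" using mod_eq_dvd_iff_nat[of a b k] by simp
  moreover have "0 < b - a" "b - a < k" using ab by auto
  ultimately show False using nat_dvd_not_less by blast
qed

lemma blk_union: "valid f \<Longrightarrow> blk f j \<union> blk f (Suc j) = c ` {f j..<f (Suc (Suc j))}"
proof -
  assume v: "valid f"
  have "{f j..<f (Suc j)} \<union> {f (Suc j)..<f (Suc (Suc j))} = {f j..<f (Suc (Suc j))}"
    using valid_inc[OF v, of j] valid_inc[OF v, of "Suc j"] by auto
  then show ?thesis unfolding blk_def by (metis image_Un)
qed

lemma move:
  assumes vf: "valid f" and vg: "valid g" and k2: "k \<ge> 2" and i1: "1 \<le> i"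
    and same: "\<forall>j. j mod k \<noteq> i mod k \<longrightarrow> g j = f j"
  shows "reach 1 (part f) (part g)"
proof (cases "part f = part g")
  case True then show ?thesis using reach_refl by simp
next
  case False
  let ?W = "{i - 1..<i - 1 + k}"
  have Pf: "part f = blk f ` ?W" and Pg: "part g = blk g ` ?W"
    using blk_window[OF vf] blk_window[OF vg] by auto
  have "i mod k \<noteq> (i - 1) mod k" using modne[of "i - 1" i] k2 i1 by simp
  then have im1: "g (i - 1) = f (i - 1)" using same by metis
  have ip1: "g (Suc i) = f (Suc i)" using same modne[of i "Suc i"] k2 by auto
  have si: "Suc (i - 1) = i" using i1 by simp
  have mem: "i - 1 \<in> ?W" "i \<in> ?W" using k2 i1 by auto
  have ne: "i - 1 \<noteq> i" using i1 by simp
  have AB: "blk f (i - 1) \<noteq> blk f i"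
  proof
    assume "blk f (i - 1) = blk f i"
    then have "c (f i) \<in> blk f (i - 1) \<inter> blk f i" using blk_ne[OF vf, of i] by simp
    then show False using blk_disj[OF vf mem ne] by blast
  qed
  have CD: "blk g (i - 1) \<noteq> blk g i"
  proof
    assume "blk g (i - 1) = blk g i"
    then have "c (g i) \<in> blk g (i - 1) \<inter> blk g i" using blk_ne[OF vg, of i] by simp
    then show False using blk_disj[OF vg mem ne] by blast
  qed
  have U: "blk f (i - 1) \<union> blk f i = blk g (i - 1) \<union> blk g i"
    using blk_union[OF vf, of "i - 1"] blk_union[OF vg, of "i - 1"] si im1 ip1 by simp
  have eqo: "blk f j = blk g j" if "j \<in> ?W - {i - 1, i}" for j
  proof -
    have "i < j" "j < i + k" "Suc j < i + k" using that i1 by auto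
    then have "j mod k \<noteq> i mod k" "Suc j mod k \<noteq> i mod k"
      using modne[of i j] modne[of i "Suc j"] that by auto
    then show ?thesis using same unfolding blk_def by simp
  qed
  have sub: "{i - 1, i} \<subseteq> ?W" "?W - {i - 1, i} \<subseteq> ?W" using mem by auto
  have "part f - {blk f (i - 1), blk f i} = blk f ` ?W - blk f ` {i - 1, i}" using Pf by simp
  also have "\<dots> = blk f ` (?W - {i - 1, i})"
    by (rule inj_on_image_set_diff[OF blk_inj[OF vf] sub(2) sub(1), symmetric])
  also have "\<dots> = blk g ` (?W - {i - 1, i})" using eqo by (rule image_cong[OF refl])
  also have "\<dots> = blk g ` ?W - blk g ` {i - 1, i}"
    by (rule inj_on_image_set_diff[OF blk_inj[OF vg] sub(2) sub(1)])
  also have "\<dots> = part g - {blk g (i - 1), blk g i}" using Pg by simp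
  finally have D: "part f - {blk f (i - 1), blk f i} = part g - {blk g (i - 1), blk g i}" .
  have m1: "blk f (i - 1) \<in> part f" "blk f i \<in> part f" "blk g (i - 1) \<in> part g" "blk g i \<in> part g"
    using mem Pf Pg by auto
  have "recomb (part f) (part g)"
    unfolding recomb_def
    by (intro conjI False bexI[OF _ m1(1)] bexI[OF _ m1(2)] bexI[OF _ m1(3)] bexI[OF _ m1(4)] AB CD U D)
  moreover have "part f \<in> Bal V E s k" "part g \<in> Bal V E s k"
    using Canon_part[OF vf] Canon_part[OF vg] unfolding Canon_def by simp_all
  ultimately have "Rc (part f) (part g)"
    using Canon_part[OF vf] Canon_part[OF vg] unfolding Rc_def R_edge_def by simp
  then show ?thesis by (rule reach_step)
qed


definition D :: "(nat \<Rightarrow> int) \<Rightarrow> nat \<Rightarrow> int" where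
  "D f j = f j - f 0 - int j * int d"

definition cfg :: "(nat \<Rightarrow> int) \<Rightarrow> (nat \<Rightarrow> int) \<Rightarrow> nat \<Rightarrow> int" where
  "cfg f a j = f 0 + int j * int d + min (D f j) (a j)"

definition Ecfg :: "int \<Rightarrow> nat \<Rightarrow> int" where
  "Ecfg x j = x + int j * int d"

lemma int_n: "int n = int k * int d" using nkd by simp

lemma D_mod: "valid f \<Longrightarrow> D f j = D f (j mod k)"
proof -
  assume v: "valid f"
  have "f j = f (j mod k) + int (j div k) * int n" using valid_mod[OF v] by blast
  moreover have "int j = int (j mod k) + int (j div k) * int k"
    by (metis of_nat_add of_nat_mult mod_div_mult_eq)
  ultimately show ?thesis unfolding D_def int_n by (simp add: algebra_simps)
qed

lemma D_0: "D f 0 = 0" unfolding D_def by simp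

lemma D_k: "valid f \<Longrightarrow> D f k = 0"
  unfolding D_def using valid_per[of f 0] int_n by simp

lemma D_gap: "f (Suc j) - f j = int d + D f (Suc j) - D f j"
  unfolding D_def by (simp add: algebra_simps)

lemma D_bound_aux: "valid f \<Longrightarrow> u \<le> k \<Longrightarrow> D f (k - u) \<le> int u * (int d - 1)"
proof (induction u)
  case 0 then show ?case using D_k by simp
next
  case (Suc u)
  then have "D f (k - u) \<le> int u * (int d - 1)" by simp
  moreover have "Suc (k - Suc u) = k - u" using Suc.prems by simp
  moreover have "1 \<le> f (Suc (k - Suc u)) - f (k - Suc u)"
    using valid_inc[OF Suc.prems(1), of "k - Suc u"] by simp
  ultimately show ?case using D_gap[of f "k - Suc u"] by (simp add: algebra_simps)
qed

lemma D_bound: "valid f \<Longrightarrow> r \<le> k \<Longrightarrow> D f r \<le> int (k - r) * (int d - 1)"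
  using D_bound_aux[of f "k - r"] by simp

lemma valid_cfg:
  assumes v: "valid f" and per: "\<forall>j. a (j + k) = a j"
    and lip: "\<forall>j. \<bar>a (Suc j) - a j\<bar> \<le> int d - 1"
  shows "valid (cfg f a)"
proof -
  have P: "cfg f a (j + k) = cfg f a j + int n" for j
  proof -
    have "D f (j + k) = D f j" using D_mod[OF v, of "j + k"] D_mod[OF v, of j] by simp
    then show ?thesis unfolding cfg_def using per int_n by (simp add: algebra_simps)
  qed
  have G: "cfg f a j < cfg f a (Suc j) \<and> real_of_int (cfg f a (Suc j) - cfg f a j) \<le> real d + s" for j
  proof -
    have g: "cfg f a (Suc j) - cfg f a j = int d + min (D f (Suc j)) (a (Suc j)) - min (D f j) (a j)"
      unfolding cfg_def by (simp add: algebra_simps)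
    have h1: "1 \<le> int d + D f (Suc j) - D f j"
      using valid_inc[OF v, of j] D_gap[of f j] by simp
    have r: "real_of_int (int d + D f (Suc j) - D f j) \<le> real d + s"
      using valid_gap[OF v, of j] D_gap[of f j] by simp
    have h2: "\<bar>a (Suc j) - a j\<bar> \<le> int d - 1" using lip by blast
    note m = minlem[OF h1 h2]
    have A: "cfg f a j < cfg f a (Suc j)" using g m(1) by simp
    have B: "real_of_int (cfg f a (Suc j) - cfg f a j) \<le> real d + s"
      using m(2)
    proof
      assume a1: "min (D f (Suc j)) (a (Suc j)) - min (D f j) (a j) \<le> D f (Suc j) - D f j"
      have "cfg f a (Suc j) - cfg f a j \<le> int d + D f (Suc j) - D f j" using g a1 by simp
      then have "real_of_int (cfg f a (Suc j) - cfg f a j) \<le> real_of_int (int d + D f (Suc j) - D f j)"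
        by (simp only: of_int_le_iff)
      then show ?thesis using r by linarith
    next
      assume "min (D f (Suc j)) (a (Suc j)) - min (D f j) (a j) \<le> int d - 1"
      then have "cfg f a (Suc j) - cfg f a j \<le> 2 * int d - 1" using g by simp
      then have "real_of_int (cfg f a (Suc j) - cfg f a j) \<le> real_of_int (2 * int d - 1)"
        by (simp only: of_int_le_iff)
      then show ?thesis using s_ge_d by simp
    qed
    show ?thesis using A B by blast
  qed
  show ?thesis unfolding valid_def using P G by blast
qed

lemma valid_E: "valid (Ecfg x)"
proof -
  have P: "Ecfg x (j + k) = Ecfg x j + int n" for j unfolding Ecfg_def int_n by (simp add: algebra_simps)
  have g: "Ecfg x (Suc j) - Ecfg x j = int d" for j unfolding Ecfg_def by (simp add: algebra_simps)
  have "Ecfg x j < Ecfg x (Suc j) \<and> real_of_int (Ecfg x (Suc j) - Ecfg x j) \<le> real d + s" for j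
    using g[of j] d_pos s_ge_d by simp
  then show ?thesis unfolding valid_def using P by blast
qed

lemma cfg_top:
  assumes v: "valid f" and pos: "\<forall>j. 0 \<le> D f j"
  shows "cfg f (\<lambda>_. int (k - 1) * (int d - 1)) = f"
proof
  fix j
  have "D f j \<le> int (k - 1) * (int d - 1)"
  proof (cases "j mod k = 0")
    case True
    then show ?thesis using D_mod[OF v, of j] D_0 d_pos k1 by simp
  next
    case False
    have "D f (j mod k) \<le> int (k - j mod k) * (int d - 1)"
      using D_bound[OF v] k1 by (simp add: less_imp_le)
    also have "\<dots> \<le> int (k - 1) * (int d - 1)"
      using False d_pos by (intro mult_right_mono) auto
    finally show ?thesis using D_mod[OF v, of j] by simp
  qed
  then show "cfg f (\<lambda>_. int (k - 1) * (int d - 1)) j = f j"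
    unfolding cfg_def D_def by simp
qed

lemma cfg_bot:
  assumes "\<forall>j. 0 \<le> D f j"
  shows "cfg f (\<lambda>_. 0) = Ecfg (f 0)"
proof
  fix j
  have "0 \<le> D f j" using assms by blast
  then show "cfg f (\<lambda>_. 0) j = Ecfg (f 0) j" unfolding cfg_def Ecfg_def by simp
qed

definition lev :: "nat \<Rightarrow> int \<Rightarrow> int \<Rightarrow> nat \<Rightarrow> int" where
  "lev t L L' j = (if 1 \<le> j mod k \<and> j mod k \<le> t then L' else L)"

lemma level_trans:
  assumes v: "valid f" and k2: "k \<ge> 2" and L: "0 \<le> L'" "L' \<le> L" "L - L' \<le> int d - 1"
  shows "t \<le> k - 1 \<Longrightarrow> reach t (part (cfg f (\<lambda>_. L))) (part (cfg f (lev t L L')))"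
proof (induction t)
  case 0
  have "lev 0 L L' = (\<lambda>_. L)" unfolding lev_def by auto
  then show ?case using reach_refl by simp
next
  case (Suc t)
  have vl: "valid (cfg f (lev t' L L'))" for t'
    by (rule valid_cfg[OF v]) (use L in \<open>auto simp: lev_def\<close>)
  have st: "Suc t mod k = Suc t" using Suc.prems k2 by simp
  have "\<forall>j. j mod k \<noteq> Suc t mod k \<longrightarrow> cfg f (lev (Suc t) L L') j = cfg f (lev t L L') j"
    unfolding st cfg_def lev_def by auto
  then have "reach 1 (part (cfg f (lev t L L'))) (part (cfg f (lev (Suc t) L L')))"
    by (intro move[OF vl vl k2]) auto
  then show ?case using Suc reach_trans by fastforce
qed

lemma descend:
  assumes v: "valid f" and k2: "k \<ge> 2" and pos: "\<forall>j. 0 \<le> D f j"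
  shows "u \<le> k - 1 \<Longrightarrow> reach (tri u) (part f) (part (cfg f (\<lambda>_. int (k - 1 - u) * (int d - 1))))"
proof (induction u)
  case 0
  then show ?case using cfg_top[OF v pos] reach_refl by simp
next
  case (Suc u)
  define L where "L = int (k - 1 - u) * (int d - 1)"
  define L' where "L' = int (k - 1 - Suc u) * (int d - 1)"
  have kk: "int (k - 1 - u) = int (k - 1 - Suc u) + 1" using Suc.prems by simp
  have LL: "L = L' + (int d - 1)" unfolding L_def L'_def kk by (simp add: algebra_simps)
  have L'0: "0 \<le> L'" unfolding L'_def using d_pos by simp
  have r1: "reach (Suc u) (part (cfg f (\<lambda>_. L))) (part (cfg f (lev (Suc u) L L')))"
    using level_trans[OF v k2 L'0, of L "Suc u"] LL Suc.prems d_pos by simp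
  have "cfg f (lev (Suc u) L L') = cfg f (\<lambda>_. L')"
  proof
    fix j
    let ?r = "j mod k"
    have Dj: "D f j = D f ?r" using D_mod[OF v] by simp
    show "cfg f (lev (Suc u) L L') j = cfg f (\<lambda>_. L') j"
    proof (cases "1 \<le> ?r \<and> ?r \<le> Suc u")
      case True then show ?thesis unfolding cfg_def lev_def by simp
    next
      case False
      show ?thesis
      proof (cases "?r = 0")
        case True
        then have "D f j = 0" using Dj D_0 by simp
        then show ?thesis unfolding cfg_def lev_def using L'0 LL d_pos by (simp add: min_def)
      next
        case r0: False
        then have r: "Suc (Suc u) \<le> ?r" "?r \<le> k" using False k2 by (auto simp: less_imp_le)
        have "D f ?r \<le> int (k - ?r) * (int d - 1)" using D_bound[OF v r(2)] .
        also have "\<dots> \<le> L'" unfolding L'_def using r d_pos by (intro mult_right_mono) auto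
        finally have "D f j \<le> L'" using Dj by simp
        then show ?thesis unfolding cfg_def lev_def using False LL d_pos by (simp add: min_def)
      qed
    qed
  qed
  then have "reach (Suc u) (part (cfg f (\<lambda>_. L))) (part (cfg f (\<lambda>_. L')))" using r1 by simp
  then show ?case using Suc reach_trans unfolding L_def L'_def by fastforce
qed

lemma to_E:
  assumes v: "valid f" and k2: "k \<ge> 2" and pos: "\<forall>j. 0 \<le> D f j"
  shows "reach (tri (k - 1)) (part f) (part (Ecfg (f 0)))"
  using descend[OF v k2 pos, of "k - 1"] cfg_bot[OF pos] by simp

definition rot :: "int \<Rightarrow> int \<Rightarrow> nat \<Rightarrow> nat \<Rightarrow> int" where
  "rot x dl t j = x + int j * int d + (if j mod k < t then dl else 0)"

lemma valid_rot: "0 \<le> dl \<Longrightarrow> dl < int d \<Longrightarrow> valid (rot x dl t)"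
proof -
  assume dl: "0 \<le> dl" "dl < int d"
  have p: "rot x dl t (j + k) = rot x dl t j + int n" for j
    unfolding rot_def int_n by (simp add: algebra_simps)
  have g: "rot x dl t (Suc j) - rot x dl t j = int d + (if Suc j mod k < t then dl else 0)
      - (if j mod k < t then dl else 0)" for j
    unfolding rot_def by (simp add: algebra_simps)
  have b: "1 \<le> rot x dl t (Suc j) - rot x dl t j \<and> rot x dl t (Suc j) - rot x dl t j \<le> 2 * int d - 1" for j
    unfolding g using dl by auto
  have "rot x dl t j < rot x dl t (Suc j) \<and> real_of_int (rot x dl t (Suc j) - rot x dl t j) \<le> real d + s" for j
  proof -
    have "real_of_int (rot x dl t (Suc j) - rot x dl t j) \<le> real_of_int (2 * int d - 1)"
      using b[of j] by (simp only: of_int_le_iff)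
    then show ?thesis using b[of j] s_ge_d by simp
  qed
  then show ?thesis unfolding valid_def using p by auto
qed

lemma rot_trans:
  assumes k2: "k \<ge> 2" and dl: "0 \<le> dl" "dl < int d"
  shows "t \<le> k \<Longrightarrow> reach t (part (rot x dl 0)) (part (rot x dl t))"
proof (induction t)
  case 0 then show ?case using reach_refl by simp
next
  case (Suc t)
  define i where "i = (if t = 0 then k else t)"
  have i1: "1 \<le> i" unfolding i_def using k2 by auto
  have im: "i mod k = t" unfolding i_def using Suc.prems by auto
  have "\<forall>j. j mod k \<noteq> i mod k \<longrightarrow> rot x dl (Suc t) j = rot x dl t j"
    unfolding im rot_def by auto
  then have "reach 1 (part (rot x dl t)) (part (rot x dl (Suc t)))"
    by (intro move[OF valid_rot[OF dl] valid_rot[OF dl] k2 i1]) auto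
  then show ?case using Suc reach_trans by fastforce
qed

lemma E_rot:
  assumes k2: "k \<ge> 2" and dl: "0 \<le> dl" "dl < int d"
  shows "reach k (part (Ecfg x)) (part (Ecfg (x + dl)))"
proof -
  have "rot x dl 0 = Ecfg x" unfolding rot_def Ecfg_def by auto
  moreover have "rot x dl k = Ecfg (x + dl)" unfolding rot_def Ecfg_def using k2 by auto
  ultimately show ?thesis using rot_trans[OF k2 dl, of k x] by simp
qed

lemma E_shift: "part (Ecfg (x + int d)) = part (Ecfg x)"
proof -
  have "Ecfg (x + int d) = (\<lambda>j. Ecfg x (j + 1))" unfolding Ecfg_def by (auto simp: algebra_simps)
  then show ?thesis using part_shift[OF valid_E, of x 1] by simp
qed

lemma E_mult: "part (Ecfg (x + int q * int d)) = part (Ecfg x)"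
proof (induction q)
  case 0 then show ?case by simp
next
  case (Suc q)
  have e: "x + int (Suc q) * int d = (x + int q * int d) + int d" by (simp add: algebra_simps)
  show ?case unfolding e E_shift by (rule Suc.IH)
qed

lemma E_modd: "part (Ecfg y) = part (Ecfg (x + (y - x) mod int d))"
proof -
  define q where "q = (y - x) div int d"
  have y: "y = x + (y - x) mod int d + q * int d" unfolding q_def
    by (metis add.commute diff_add_cancel mod_div_mult_eq add.assoc)
  show ?thesis
  proof (cases "0 \<le> q")
    case True
    then have "y = (x + (y - x) mod int d) + int (nat q) * int d" using y by simp
    then show ?thesis using E_mult[of "x + (y - x) mod int d" "nat q"] by simp
  next
    case False
    then have "x + (y - x) mod int d = y + int (nat (- q)) * int d" using y by simp
    then show ?thesis using E_mult[of y "nat (- q)"] by simp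
  qed
qed


lemma normalize:
  assumes v: "valid f"
  shows "\<exists>g. valid g \<and> part g = part f \<and> (\<forall>j. 0 \<le> D g j)"
proof -
  have fin: "finite (D f ` {0..<k})" and ne: "D f ` {0..<k} \<noteq> {}" using k1 by auto
  obtain j0 where j0: "j0 \<in> {0..<k}" "D f j0 = Min (D f ` {0..<k})"
    using Min_in[OF fin ne] by auto
  have mn: "D f j0 \<le> D f j" for j
  proof -
    have "j mod k \<in> {0..<k}" using k1 by auto
    then have "D f j0 \<le> D f (j mod k)" using j0 fin by simp
    then show ?thesis using D_mod[OF v, of j] by simp
  qed
  let ?g = "\<lambda>j. f (j + j0)"
  have "D ?g j = D f (j + j0) - D f j0" for j unfolding D_def by (simp add: algebra_simps)
  then have "0 \<le> D ?g j" for j using mn[of "j + j0"] by simp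
  then show ?thesis using valid_shift[OF v] part_shift[OF v] by blast
qed

context
  fixes P assumes PC: "P \<in> Canon V E C s k" and k2: "k \<ge> 2"
begin

lemma PCP: "connected_partition V E k P" and Pbal: "\<forall>U\<in>P. \<bar>real (card U) - real (card V) / real k\<bar> \<le> s"
  and Pcan: "\<forall>U\<in>P. consecutive_on C U"
  using PC unfolding Canon_def Bal_def canonical_def by auto

lemma Pfin: "finite P" and Pcard: "card P = k" and PU: "\<Union>P = V" and Pne: "\<And>U. U \<in> P \<Longrightarrow> U \<noteq> {}"
  and Pdisj: "\<And>U W. U \<in> P \<Longrightarrow> W \<in> P \<Longrightarrow> U \<noteq> W \<Longrightarrow> U \<inter> W = {}"
  using PCP unfolding connected_partition_def by auto

lemma P_same: "U \<in> P \<Longrightarrow> W \<in> P \<Longrightarrow> v \<in> U \<Longrightarrow> v \<in> W \<Longrightarrow> U = W"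
  using Pdisj by blast

lemma arc_form: "U \<in> P \<Longrightarrow> \<exists>i l. 0 \<le> l \<and> l \<le> int n \<and> U = c ` {i..<i + l}"
proof -
  assume "U \<in> P"
  then obtain i l where il: "i < length C" "l \<le> length C" "U = {C ! ((i + t) mod length C) | t. t < l}"
    using Pcan unfolding consecutive_on_def by blast
  have ci: "c (int i + int t) = C ! ((i + t) mod n)" for t
    using c_shift[of "int i" t] il(1) unfolding n_def by simp
  have "U = c ` {int i..<int i + int l}"
  proof
    show "U \<subseteq> c ` {int i..<int i + int l}"
    proof
      fix u assume "u \<in> U"
      then obtain t where t: "t < l" "u = C ! ((i + t) mod length C)" using il(3) by blast
      then have "u = c (int i + int t)" using ci unfolding n_def by simp
      then show "u \<in> c ` {int i..<int i + int l}" using t by auto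
    qed
    show "c ` {int i..<int i + int l} \<subseteq> U"
    proof
      fix u assume "u \<in> c ` {int i..<int i + int l}"
      then obtain y where y: "int i \<le> y" "y < int i + int l" "u = c y" by auto
      have "int i + int (nat (y - int i)) = y" using y by simp
      then have "u = c (int i + int (nat (y - int i)))" using y by simp
      also have "\<dots> = C ! ((i + nat (y - int i)) mod length C)"
        by (rule ci[of "nat (y - int i)", unfolded n_def])
      finally show "u \<in> U" using il(3) y by auto
    qed
  qed
  then show ?thesis using il(2) unfolding n_def by (intro exI[of _ "int i"] exI[of _ "int l"]) auto
qed

definition bo :: "int \<Rightarrow> 'a set" where "bo x = (THE U. U \<in> P \<and> c x \<in> U)"

lemma bo: "bo x \<in> P \<and> c x \<in> bo x"
proof -
  obtain U where U: "U \<in> P" "c x \<in> U" using PU c_in_V by blast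
  have "\<exists>!U. U \<in> P \<and> c x \<in> U" using U P_same by blast
  then show ?thesis unfolding bo_def by (rule theI')
qed

lemma bo_uniq: "U \<in> P \<Longrightarrow> c x \<in> U \<Longrightarrow> bo x = U"
  using bo P_same by blast

lemma card_lt: "U \<in> P \<Longrightarrow> card U < n"
proof -
  assume U: "U \<in> P"
  have "\<not> P \<subseteq> {U}"
  proof
    assume "P \<subseteq> {U}"
    then have "card P \<le> 1" using card_mono[of "{U}" P] by simp
    then show False using Pcard k2 by simp
  qed
  then obtain W where W: "W \<in> P" "W \<noteq> U" by auto
  have "U \<noteq> V"
  proof
    assume "U = V"
    then have "W \<inter> V = {}" using Pdisj[OF W(1) U] W(2) by simp
    moreover have "W \<subseteq> V" using W(1) PU by auto
    ultimately show False using Pne[OF W(1)] by auto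
  qed
  moreover have "U \<subseteq> V" using U PU by auto
  ultimately show ?thesis using finV n_eq by (simp add: psubset_card_mono psubsetI)
qed

lemma card_pos: "U \<in> P \<Longrightarrow> 0 < card U"
proof -
  assume U: "U \<in> P"
  then have "finite U" using PU finV by (meson Union_upper finite_subset)
  then show ?thesis using Pne[OF U] by (simp add: card_gt_0_iff)
qed

definition st :: "int \<Rightarrow> bool" where "st x \<longleftrightarrow> c (x - 1) \<notin> bo x"

lemma st_form: "st x \<Longrightarrow> bo x = c ` {x..<x + int (card (bo x))}"
proof -
  assume sx: "st x"
  obtain i l where il: "0 \<le> l" "l \<le> int n" "bo x = c ` {i..<i + l}" using arc_form bo by blast
  have cl: "int (card (bo x)) = l" using c_card[OF il(1,2)] il by simp
  have "c x \<in> c ` {i..<i + l}" using bo[of x] il(3) by simp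
  then obtain y where y0: "y \<in> {i..<i + l}" "c x = c y" by blast
  then have y: "i \<le> y" "y < i + l" "c x = c y" by auto
  have "y = i"
  proof (rule ccontr)
    assume "y \<noteq> i"
    then have "c (y - 1) \<in> bo x" using y il(3) by auto
    moreover have "c (x - 1) = c (y - 1)" using y(3) unfolding c_eq_iff
      by (intro mod_diff_cong) simp_all
    ultimately show False using sx unfolding st_def by simp
  qed
  then have "x mod int n = i mod int n" using y(3) c_eq_iff by simp
  then have "c ` {x..<x + l} = c ` {i..<i + l}" by (rule c_img_shift)
  then show ?thesis using il(3) cl by simp
qed

lemma st_next: "st x \<Longrightarrow> st (x + int (card (bo x)))"
proof -
  assume sx: "st x"
  let ?l = "int (card (bo x))"
  have U: "bo x = c ` {x..<x + ?l}" using st_form[OF sx] .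
  have l: "1 \<le> ?l" "?l < int n" using card_pos[of "bo x"] card_lt[of "bo x"] bo by auto
  have "c (x + ?l) \<notin> bo x"
  proof
    assume "c (x + ?l) \<in> bo x"
    then have "c (x + ?l) \<in> c ` {x..<x + ?l}" using U by simp
    then obtain y where y0: "y \<in> {x..<x + ?l}" "c (x + ?l) = c y" by blast
    then have y: "x \<le> y" "y < x + ?l" "c (x + ?l) = c y" by auto
    then have "(x + ?l) mod int n = y mod int n" using c_eq_iff by blast
    moreover have "x \<le> x + ?l" "x + ?l < x + int n" "y < x + int n" using l y by auto
    ultimately have "x + ?l = y" using mod_eq_window[of "x + ?l" y x] y(1) by blast
    then show False using y(2) by simp
  qed
  have ne: "bo (x + ?l) \<noteq> bo x"
  proof
    assume "bo (x + ?l) = bo x"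
    then show False using bo[of "x + ?l"] \<open>c (x + ?l) \<notin> bo x\<close> by simp
  qed
  have "c (x + ?l - 1) \<in> bo x" using U l by auto
  then have "c (x + ?l - 1) \<notin> bo (x + ?l)" using P_same[OF bo[THEN conjunct1] bo[THEN conjunct1]] ne by blast
  then show ?thesis unfolding st_def by simp
qed

lemma st_exists: "\<exists>x. st x"
proof -
  have "P \<noteq> {}" using Pcard k2 by auto
  then obtain U where U: "U \<in> P" by auto
  obtain i l where il: "0 \<le> l" "l \<le> int n" "U = c ` {i..<i + l}" using arc_form[OF U] by blast
  have cl: "int (card U) = l" using c_card[OF il(1,2)] il by simp
  have l: "1 \<le> l" "l < int n" using card_pos[OF U] card_lt[OF U] cl by auto
  have bi: "bo i = U" using bo_uniq[OF U] il(3) l by auto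
  have "c (i - 1) \<notin> U"
  proof
    assume "c (i - 1) \<in> U"
    then obtain y where y: "i \<le> y" "y < i + l" "c (i - 1) = c y" using il(3) by auto
    have "c (i - 1 + int n) = c y" using y(3) c_per by simp
    then have "(i - 1 + int n) mod int n = y mod int n" using c_eq_iff by blast
    moreover have "i \<le> i - 1 + int n" "i - 1 + int n < i + int n" "y < i + int n" using y l by auto
    ultimately have "i - 1 + int n = y" using mod_eq_window[of "i - 1 + int n" y i] y(1) by blast
    then show False using y l by simp
  qed
  then show ?thesis unfolding st_def using bi by auto
qed

definition x0 :: int where "x0 = (SOME x. st x)"
definition fq :: "nat \<Rightarrow> int" where "fq j = ((\<lambda>x. x + int (card (bo x))) ^^ j) x0"

lemma fq_0: "fq 0 = x0" unfolding fq_def by simp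
lemma fq_Suc: "fq (Suc j) = fq j + int (card (bo (fq j)))" unfolding fq_def by simp

lemma fq_st: "st (fq j)"
proof (induction j)
  case 0 then show ?case unfolding fq_0 x0_def using st_exists by (rule someI_ex)
next
  case (Suc j) then show ?case unfolding fq_Suc by (rule st_next)
qed

lemma fq_inc: "fq j < fq (Suc j)"
  unfolding fq_Suc using card_pos bo by auto

lemma fq_less: "i < j \<Longrightarrow> fq i < fq j"
  using lift_Suc_mono_less[of fq] fq_inc by blast

lemma fq_le: "i \<le> j \<Longrightarrow> fq i \<le> fq j"
  using fq_less[of i j] by (cases "i = j") auto

lemma fq_blk: "bo (fq j) = c ` {fq j..<fq (Suc j)}"
  using st_form[OF fq_st] fq_Suc by simp

lemma fq_grow: "fq 0 + int j \<le> fq j"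
proof (induction j)
  case (Suc j) then show ?case using fq_inc[of j] by simp
qed simp

definition M :: nat where "M = (LEAST m. fq 0 + int n \<le> fq m)"

lemma M_props: "fq 0 + int n \<le> fq M" "\<And>m. m < M \<Longrightarrow> fq m < fq 0 + int n"
proof -
  have ex: "\<exists>m. fq 0 + int n \<le> fq m" using fq_grow by blast
  show "fq 0 + int n \<le> fq M" unfolding M_def using LeastI_ex[OF ex] .
  show "\<And>m. m < M \<Longrightarrow> fq m < fq 0 + int n" unfolding M_def using not_less_Least by fastforce
qed

lemma M_pos: "0 < M"
proof (rule ccontr)
  assume "\<not> 0 < M"
  then have "M = 0" by simp
  then show False using M_props(1) n_ge3 by simp
qed

lemma fq_M: "fq M = fq 0 + int n"
proof (rule ccontr)
  assume "fq M \<noteq> fq 0 + int n"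
  then have gt: "fq 0 + int n < fq M" using M_props(1) by simp
  let ?y = "fq (M - 1)"
  have sm: "Suc (M - 1) = M" using M_pos by simp
  have yl: "?y < fq 0 + int n" using M_props(2)[of "M - 1"] M_pos by simp
  have y0: "fq 0 \<le> ?y" using fq_le by simp
  have "c (fq 0 + int n) \<in> bo ?y" using fq_blk[of "M - 1"] sm gt yl by auto
  then have "c (fq 0) \<in> bo ?y" using c_per by simp
  then have b: "bo (fq 0) = bo ?y" using bo_uniq bo by blast
  have "c ?y \<in> bo (fq 0)" using b bo by simp
  then have "c ?y \<in> c ` {fq 0..<fq (Suc 0)}" using fq_blk[of 0] by simp
  then obtain z where z0: "z \<in> {fq 0..<fq (Suc 0)}" "c ?y = c z" by blast
  then have z: "fq 0 \<le> z" "z < fq 1" "c ?y = c z" by auto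
  have f1: "fq 1 < fq 0 + int n" using fq_Suc[of 0] card_lt bo by auto
  have "?y mod int n = z mod int n" using z(3) c_eq_iff by blast
  then have "?y = z" using mod_eq_window[of ?y z "fq 0"] z y0 yl f1 by linarith
  then have "?y < fq 1" using z by simp
  then have "M - 1 < 1" using fq_le[of 1 "M - 1"] by (meson leI not_le)
  then have "M = 1" using M_pos by simp
  then show False using gt f1 by simp
qed

lemma bo_distinct: "i < j \<Longrightarrow> j < M \<Longrightarrow> bo (fq i) \<noteq> bo (fq j)"
proof
  assume ij: "i < j" "j < M" and e: "bo (fq i) = bo (fq j)"
  have "c (fq j) \<in> bo (fq i)" using e bo by simp
  then have "c (fq j) \<in> c ` {fq i..<fq (Suc i)}" using fq_blk[of i] by simp
  then obtain z where z0: "z \<in> {fq i..<fq (Suc i)}" "c (fq j) = c z" by blast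
  then have z: "fq i \<le> z" "z < fq (Suc i)" "c (fq j) = c z" by auto
  have a: "fq 0 \<le> fq j" "fq j < fq 0 + int n" using fq_le fq_less[OF ij(2)] fq_M by auto
  have b: "fq 0 \<le> z" "z < fq 0 + int n" using z fq_le[of 0 i] fq_le[of "Suc i" M] ij fq_M by auto
  have "fq j mod int n = z mod int n" using z(3) c_eq_iff by blast
  then have "fq j = z" using mod_eq_window[of "fq j" z "fq 0"] a b by linarith
  moreover have "fq (Suc i) \<le> fq j" using fq_le ij by simp
  ultimately show False using z by simp
qed

lemma P_eq: "P = (\<lambda>j. bo (fq j)) ` {0..<M}"
proof
  show "(\<lambda>j. bo (fq j)) ` {0..<M} \<subseteq> P" using bo by auto
  show "P \<subseteq> (\<lambda>j. bo (fq j)) ` {0..<M}"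
  proof
    fix U assume U: "U \<in> P"
    then obtain u where u: "u \<in> U" using Pne by blast
    then have "u \<in> V" using U PU by auto
    then have "u \<in> c ` {fq 0..<fq 0 + int n}" using c_image[of "fq 0"] by simp
    then obtain x where x0: "x \<in> {fq 0..<fq 0 + int n}" "u = c x" by blast
    then have x: "fq 0 \<le> x" "x < fq M" "u = c x" using fq_M by auto
    have "\<exists>j<M. fq j \<le> x \<and> x < fq (Suc j)"
      by (rule find_interval[of fq x M]) (use fq_inc x in \<open>auto simp: less_imp_le\<close>)
    then obtain j where j: "j < M" "fq j \<le> x" "x < fq (Suc j)" by blast
    then have "u \<in> bo (fq j)" using fq_blk[of j] x by auto
    then have "U = bo (fq j)" using P_same[OF U bo[THEN conjunct1]] u by blast
    then show "U \<in> (\<lambda>j. bo (fq j)) ` {0..<M}" using j by auto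
  qed
qed

lemma M_k: "M = k"
proof -
  have "inj_on (\<lambda>j. bo (fq j)) {0..<M}"
  proof (rule inj_onI)
    fix i j assume "i \<in> {0..<M}" "j \<in> {0..<M}" "bo (fq i) = bo (fq j)"
    then show "i = j" using bo_distinct[of i j] bo_distinct[of j i]
      by (cases i j rule: linorder_cases) auto
  qed
  then have "card ((\<lambda>j. bo (fq j)) ` {0..<M}) = M" by (simp add: card_image)
  then have "card P = M" using P_eq by simp
  then show ?thesis using Pcard by simp
qed

lemma fq_per: "fq (j + k) = fq j + int n"
proof (induction j)
  case 0 then show ?case using fq_M M_k by simp
next
  case (Suc j)
  have "c (fq j + int n) \<in> bo (fq j)" using bo[of "fq j"] c_per by simp
  then have "bo (fq j + int n) = bo (fq j)"
    using bo_uniq bo[of "fq j"] by blast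
  then show ?case using Suc fq_Suc[of "j + k"] fq_Suc[of j] by simp
qed

lemma valid_fq: "valid fq"
proof -
  have "real_of_int (fq (Suc j) - fq j) \<le> real d + s" for j
  proof -
    have "\<bar>real (card (bo (fq j))) - real (card V) / real k\<bar> \<le> s" using Pbal bo by blast
    then show ?thesis using fq_Suc[of j] real_nk by (simp add: abs_le_iff)
  qed
  then show ?thesis unfolding valid_def using fq_per fq_inc by blast
qed

lemma part_fq: "part fq = P"
proof -
  have "blk fq j = bo (fq j)" for j unfolding blk_def using fq_blk by simp
  then show ?thesis unfolding part_def using P_eq M_k by simp
qed

lemma decomp: "\<exists>f. valid f \<and> part f = P"
  using valid_fq part_fq by blast

end


lemma main_k2:
  assumes k2: "k \<ge> 2" and P: "P \<in> Canon V E C s k" and Q: "Q \<in> Canon V E C s k"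
  shows "reach (k^2 + 1) P Q"
proof -
  obtain f where f: "valid f" "part f = P" using decomp[OF P k2] by blast
  obtain f1 where f1: "valid f1" "part f1 = P" "\<forall>j. 0 \<le> D f1 j" using normalize[OF f(1)] f(2) by auto
  obtain g where g: "valid g" "part g = Q" using decomp[OF Q k2] by blast
  obtain g1 where g1: "valid g1" "part g1 = Q" "\<forall>j. 0 \<le> D g1 j" using normalize[OF g(1)] g(2) by auto
  define x where "x = f1 0"
  define y where "y = g1 0"
  define dl where "dl = (y - x) mod int d"
  have dl: "0 \<le> dl" "dl < int d" unfolding dl_def using d_pos by simp_all
  have r1: "reach (tri (k - 1)) P (part (Ecfg x))" using to_E[OF f1(1) k2 f1(3)] f1(2) x_def by simp
  have r2: "reach (tri (k - 1)) (part (Ecfg y)) Q"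
    using reach_sym[OF to_E[OF g1(1) k2 g1(3)]] g1(2) y_def by simp
  have r3: "reach k (part (Ecfg x)) (part (Ecfg y))"
    using E_rot[OF k2 dl, of x] E_modd[of y x] dl_def by simp
  have r: "reach (tri (k - 1) + k + tri (k - 1)) P Q"
    using reach_trans[OF reach_trans[OF r1 r3] r2] .
  have "2 * tri (k - 1) = (k - 1) * k" using tri_eq[of "k - 1"] k2 by simp
  then have "tri (k - 1) + k + tri (k - 1) = k * k" using k2 by (cases k) (auto simp: algebra_simps)
  then have "tri (k - 1) + k + tri (k - 1) \<le> k^2 + 1" by (simp add: power2_eq_square)
  then show ?thesis using reach_mono[OF r] by blast
qed

lemma main_k1:
  assumes k: "k = 1" and P: "P \<in> Canon V E C s k"
  shows "P = {V}"
proof -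
  have cp: "connected_partition V E k P" using P unfolding Canon_def Bal_def by auto
  then have "card P = 1" "\<Union>P = V" unfolding connected_partition_def using k by auto
  then show ?thesis by (metis card_1_singletonE cSup_singleton)
qed

lemma main_all:
  assumes P: "P \<in> Canon V E C s k" and Q: "Q \<in> Canon V E C s k"
  shows "reach (k^2 + 1) P Q"
proof (cases "k = 1")
  case True
  then show ?thesis using main_k1 P Q reach_refl by metis
next
  case False
  then show ?thesis using main_k2 P Q k1 by simp
qed

end

theorem mainTheorem4:
  fixes V :: "'a set" and E :: "'a \<Rightarrow> 'a \<Rightarrow> bool" and C :: "'a list"
    and k :: nat and s :: real
  assumes "simple_graph V E"
    and "hamilton_cycle V E C"
    and "k \<ge> 1" and "k dvd card V"
    and "s \<ge> real (card V) / real k"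
  shows "\<forall>P \<in> Canon V E C s k. \<forall>Q \<in> Canon V E C s k.
           \<exists>m \<le> k^2 + 1.
             ((\<lambda>X Y. X \<in> Canon V E C s k \<and> Y \<in> Canon V E C s k \<and> R_edge V E s k X Y) ^^ m) P Q"
proof (intro ballI)
  interpret S: setting V E C k s using assms by unfold_locales
  fix P Q assume "P \<in> Canon V E C s k" "Q \<in> Canon V E C s k"
  then have "S.reach (k^2 + 1) P Q" by (rule S.main_all)
  moreover have "S.Rc = (\<lambda>X Y. X \<in> Canon V E C s k \<and> Y \<in> Canon V E C s k \<and> R_edge V E s k X Y)"
    unfolding S.Rc_def by (intro ext) simp
  ultimately show "\<exists>m \<le> k^2 + 1.
             ((\<lambda>X Y. X \<in> Canon V E C s k \<and> Y \<in> Canon V E C s k \<and> R_edge V E s k X Y) ^^ m) P Q"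
    unfolding S.reach_def by simp
qed

end
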